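(* Let $\mathcal{H}$ be a Hilbert space and $n\in\mathbb{N}$. Suppose bounded operators on $\mathcal{H}$ satisfy Assumptions 1–4 of the context, and let $K,L_i,S_{ij}$ be defined as in the context. Then $$K+K^\dagger=-L_i^\dagger L_i,\qquad S_{il}S_{jl}^\dagger=\delta_{ij}P_0,\qquad S_{li}^\dagger S_{lj}=\delta_{ij}P_0$$ for all $i,j\in\{1,\dots,n\}$.
   Context: Repeated indices not inside parentheses are summed over $\{1,\dots,n\}$; $\dagger$ denotes the adjoint; all operators are bounded on $\mathcal{H}$. Assumption 1: for each $k\ge0$, $K^{(k)}+K^{(k)\dagger}=-L^{(k)\dagger}_iL^{(k)}_i$, $S^{(k)}_{il}S^{(k)\dagger}_{jl}=\delta_{ij}I$, $S^{(k)\dagger}_{li}S^{(k)}_{lj}=\delta_{ij}I$. Assumption 2: there are bounded operators $Y,A,B,F_i,G_i,W_{ij}$, independent of $k$, with $K^{(k)}=k^2Y+kA+B$, $L^{(k)}_i=kF_i+G_i$, $S^{(k)}_{ij}=W_{ij}$ for all $k\ge0$. Let $P_0$ be the orthogonal projection onto $\mathrm{Ker}(Y)$ and $P_1=I-P_0$. Assumption 3: there is a bounded operator $Y_1^{-1}$ on $\mathcal{H}$ with $P_1Y_1^{-1}=Y_1^{-1}P_1$, such that $YY_1^{-1}P_1ZP_0=P_1ZP_0$ for $Z\in\{A\}\cup\{F_i^\dagger W_{ij}:j=1,\dots,n\}$, and $P_0XP_1Y_1^{-1}Y=P_0XP_1$ for every $X$ among $A,B,F_i,G_i,W_{ij},G_i^\dagger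 W_{ij},F_iY_1^{-1}F_j,F_iY_1^{-1}A,F_iY_1^{-1}F_l^\dagger W_{lj},AY_1^{-1}A,AY_1^{-1}F_i,AY_1^{-1}F_l^\dagger W_{lj}$; moreover $P_0YP_1=0$, $P_0AP_0=0$, $F_iP_0=0$ and $P_0(\delta_{il}+F_iY_1^{-1}F_l^\dagger)W_{lj}P_1=0$ for all $i,j$. Define $K=P_0(B-AY_1^{-1}A)P_0$, $L_i=(G_i-F_iY_1^{-1}A)P_0$, $S_{ij}=(\delta_{il}+F_iY_1^{-1}F_l^\dagger)W_{lj}P_0$. Assumption 4: $P_1L_i=0$ and $P_1S_{ij}=0$ for all $i,j$. *)

theory Defs
  imports "HOL-Analysis.Analysis" "HOL-Library.Function_Algebras"
begin

class complex_vector = real_vector +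
  fixes scaleC :: "complex \<Rightarrow> 'a \<Rightarrow> 'a" (infixr \<open>*\<^sub>C\<close> 75)
  assumes scaleC_add_right: "a *\<^sub>C (x + y) = a *\<^sub>C x + a *\<^sub>C y"
    and scaleC_add_left: "(a + b) *\<^sub>C x = a *\<^sub>C x + b *\<^sub>C x"
    and scaleC_scaleC: "a *\<^sub>C (b *\<^sub>C x) = (a * b) *\<^sub>C x"
    and scaleC_one: "1 *\<^sub>C x = x"
    and scaleR_scaleC: "scaleR r x = (complex_of_real r) *\<^sub>C x"

class complex_inner = complex_vector + real_normed_vector +
  fixes cinner :: "'a \<Rightarrow> 'a \<Rightarrow> complex"
  assumes cinner_commute: "cinner x y = cnj (cinner y x)"
    and cinner_add_left: "cinner (x + y) z = cinner x z + cinner y z"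
    and cinner_scaleC_left: "cinner (r *\<^sub>C x) y = cnj r * cinner x y"
    and cinner_ge_zero: "Im (cinner x x) = 0 \<and> 0 \<le> Re (cinner x x)"
    and cinner_eq_zero_iff: "cinner x x = 0 \<longleftrightarrow> x = 0"
    and norm_eq_sqrt_cinner: "norm x = sqrt (Re (cinner x x))"

class chilbert_space = complex_inner + complete_space

text \<open>Operators are functions on the space; sums/differences/zero of operators are
  pointwise (Function_Algebras), products are compositions, the identity is id.\<close>

definition clinear :: "('a::complex_vector \<Rightarrow> 'b::complex_vector) \<Rightarrow> bool" where
  "clinear T \<longleftrightarrow> (\<forall>x y. T (x + y) = T x + T y) \<and> (\<forall>c x. T (c *\<^sub>C x) = c *\<^sub>C T x)"

definition bounded_op :: "('a::chilbert_space \<Rightarrow> 'a) \<Rightarrow> bool" where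
  "bounded_op T \<longleftrightarrow> clinear T \<and> (\<exists>C. \<forall>x. norm (T x) \<le> norm x * C)"

definition adj :: "('a::chilbert_space \<Rightarrow> 'a) \<Rightarrow> ('a \<Rightarrow> 'a)" where
  "adj T = (THE S. \<forall>x y. cinner (T x) y = cinner x (S y))"

definition opker :: "('a::chilbert_space \<Rightarrow> 'a) \<Rightarrow> 'a set" where
  "opker T = {x. T x = 0}"

definition is_orth_proj :: "('a::chilbert_space \<Rightarrow> 'a) \<Rightarrow> 'a set \<Rightarrow> bool" where
  "is_orth_proj P M \<longleftrightarrow> (\<forall>x. P x \<in> M \<and> (\<forall>m\<in>M. cinner m (x - P x) = 0))"

definition opscale :: "complex \<Rightarrow> ('a::complex_vector \<Rightarrow> 'a) \<Rightarrow> ('a \<Rightarrow> 'a)" where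
  "opscale c T = (\<lambda>x. c *\<^sub>C T x)"

definition kdelta :: "nat \<Rightarrow> nat \<Rightarrow> ('a::complex_vector \<Rightarrow> 'a) \<Rightarrow> ('a \<Rightarrow> 'a)" where
  "kdelta i j T = (if i = j then T else 0)"

end

theory Submission
  imports Defs
begin


context complex_vector begin
lemma scaleC_zero_left[simp]: "0 *\<^sub>C x = 0"
proof -
  have "0 *\<^sub>C x = 0 *\<^sub>C x + 0 *\<^sub>C x" using scaleC_add_left[of 0 0 x] by simp
  then show ?thesis by simp
qed
lemma scaleC_zero_right[simp]: "a *\<^sub>C 0 = 0"
proof -
  have "a *\<^sub>C 0 = a *\<^sub>C 0 + a *\<^sub>C 0" using scaleC_add_right[of a 0 0] by simp
  then show ?thesis by simp
qed
lemma scaleC_minus_left: "(- a) *\<^sub>C x = - (a *\<^sub>C x)"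
  using scaleC_add_left[of a "-a" x] by (simp add: eq_neg_iff_add_eq_0 add.commute)
lemma scaleC_minus_right: "a *\<^sub>C (- x) = - (a *\<^sub>C x)"
  using scaleC_add_right[of a x "-x"] by (simp add: eq_neg_iff_add_eq_0 add.commute)
lemma scaleC_diff_right: "a *\<^sub>C (x - y) = a *\<^sub>C x - a *\<^sub>C y"
  using scaleC_add_right[of a x "-y"] by (simp add: scaleC_minus_right)
lemma scaleC_diff_left: "(a - b) *\<^sub>C x = a *\<^sub>C x - b *\<^sub>C x"
  using scaleC_add_left[of a "-b" x] by (simp add: scaleC_minus_left)
lemma scaleC_of_real: "complex_of_real r *\<^sub>C x = r *\<^sub>R x"
  by (simp add: scaleR_scaleC)
end


context complex_inner begin
lemma cnj_cinner[simp]: "cnj (cinner x y) = cinner y x"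
  by (simp add: cinner_commute[of y x])
lemma cinner_add_right: "cinner x (y + z) = cinner x y + cinner x z"
proof -
  have "cinner x (y+z) = cnj (cinner (y+z) x)" by (rule cinner_commute)
  then show ?thesis by (simp add: cinner_add_left)
qed
lemma cinner_scaleC_right: "cinner x (r *\<^sub>C y) = r * cinner x y"
proof -
  have "cinner x (r *\<^sub>C y) = cnj (cinner (r *\<^sub>C y) x)" by (rule cinner_commute)
  then show ?thesis by (simp add: cinner_scaleC_left)
qed
lemma cinner_zero_left[simp]: "cinner 0 y = 0"
  using cinner_add_left[of 0 0 y] by simp
lemma cinner_zero_right[simp]: "cinner x 0 = 0"
  using cinner_add_right[of x 0 0] by simp
lemma cinner_minus_left: "cinner (- x) y = - cinner x y"
proof -
  have "cinner x y + cinner (- x) y = 0" using cinner_add_left[of x "-x" y] by simp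
  then show ?thesis by (metis group_add_class.minus_unique)
qed
lemma cinner_minus_right: "cinner x (- y) = - cinner x y"
proof -
  have "cinner x y + cinner x (- y) = 0" using cinner_add_right[of x y "-y"] by simp
  then show ?thesis by (metis group_add_class.minus_unique)
qed
lemma cinner_diff_left: "cinner (x - y) z = cinner x z - cinner y z"
  using cinner_add_left[of x "-y" z] by (simp add: cinner_minus_left)
lemma cinner_diff_right: "cinner x (y - z) = cinner x y - cinner x z"
  using cinner_add_right[of x y "-z"] by (simp add: cinner_minus_right)
lemma cinner_scaleR_left: "cinner (r *\<^sub>R x) y = r * cinner x y"
  by (simp add: scaleR_scaleC cinner_scaleC_left)
lemma cinner_scaleR_right: "cinner x (r *\<^sub>R y) = r * cinner x y"
  by (simp add: scaleR_scaleC cinner_scaleC_right)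
lemma cinner_self_real: "cinner x x = complex_of_real ((norm x)\<^sup>2)"
  using cinner_ge_zero[of x] norm_eq_sqrt_cinner[of x] by (simp add: complex_eq_iff)
lemma norm_sq_cinner: "(norm x)\<^sup>2 = Re (cinner x x)"
  using cinner_self_real[of x] by simp
lemma cinner_ext_left: "(\<And>x. cinner x a = cinner x b) \<Longrightarrow> a = b"
proof -
  assume h: "\<And>x. cinner x a = cinner x b"
  have "cinner (a - b) (a - b) = 0" using h[of "a-b"] by (simp add: cinner_diff_right)
  then show "a = b" using cinner_eq_zero_iff by simp
qed
lemma cinner_ext_right: "(\<And>x. cinner a x = cinner b x) \<Longrightarrow> a = b"
proof -
  assume h: "\<And>x. cinner a x = cinner b x"
  have "cinner x a = cinner x b" for x 
    using arg_cong[OF h[of x], of cnj] by (simp only: cnj_cinner)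
  then show ?thesis by (rule cinner_ext_left)
qed
end

lemma cnj_mult_self: "cnj c * c = complex_of_real ((cmod c)\<^sup>2)"
  by (metis complex_norm_square mult.commute of_real_power)

context complex_inner begin
lemma re_cinner_sym: "Re (cinner y x) = Re (cinner x y)"
proof -
  have "cinner y x = cnj (cinner x y)" by (rule cinner_commute)
  then show ?thesis by (simp del: cnj_cinner)
qed
lemma norm_add_sq: "(norm (x + y))\<^sup>2 = (norm x)\<^sup>2 + (norm y)\<^sup>2 + 2 * Re (cinner x y)"
  using re_cinner_sym[of y x] by (simp add: norm_sq_cinner cinner_add_left cinner_add_right)
lemma norm_diff_sq: "(norm (x - y))\<^sup>2 = (norm x)\<^sup>2 + (norm y)\<^sup>2 - 2 * Re (cinner x y)"
  using re_cinner_sym[of y x] by (simp add: norm_sq_cinner cinner_diff_left cinner_diff_right)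
lemma parallelogram: "(norm (x + y))\<^sup>2 + (norm (x - y))\<^sup>2 = 2 * (norm x)\<^sup>2 + 2 * (norm y)\<^sup>2"
  by (simp add: norm_add_sq norm_diff_sq)
lemma norm_scaleC_sq: "(norm (c *\<^sub>C x))\<^sup>2 = (cmod c)\<^sup>2 * (norm x)\<^sup>2"
proof -
  have "cinner (c *\<^sub>C x) (c *\<^sub>C x) = cnj c * c * cinner x x"
    by (simp add: cinner_scaleC_left cinner_scaleC_right)
  also have "\<dots> = complex_of_real ((cmod c)\<^sup>2 * (norm x)\<^sup>2)" 
    by (simp only: cnj_mult_self cinner_self_real of_real_mult)
  finally show ?thesis by (simp add: norm_sq_cinner)
qed
lemma norm_scaleC: "norm (c *\<^sub>C x) = cmod c * norm x"
proof -
  have "(norm (c *\<^sub>C x))\<^sup>2 = (cmod c * norm x)\<^sup>2" using norm_scaleC_sq by (simp add: power_mult_distrib)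
  then show ?thesis by (simp add: power2_eq_iff_nonneg)
qed
end

lemma cauchy_schwarz:
  fixes x y :: "'a::complex_inner"
  shows "cmod (cinner x y) \<le> norm x * norm y"
proof (cases "y = 0")
  case True then show ?thesis by simp
next
  case False
  define c where "c = cinner y x"
  define N where "N = (norm y)\<^sup>2"
  define t where "t = c / complex_of_real N"
  have N: "N > 0" using False by (simp add: N_def)
  have ct: "cinner x y = cnj c" by (simp add: c_def)
  have tc: "t * cnj c = complex_of_real ((cmod c)\<^sup>2 / N)"
    unfolding t_def using cnj_mult_self[of c] by (simp add: mult.commute)
  have cmt: "(cmod t)\<^sup>2 = (cmod c)\<^sup>2 / N\<^sup>2"
    unfolding t_def using N by (simp add: norm_divide power_divide)
  have "0 \<le> (norm (x - t *\<^sub>C y))\<^sup>2" by simp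
  also have "\<dots> = (norm x)\<^sup>2 + (cmod t)\<^sup>2 * N - 2 * Re (t * cnj c)"
    by (simp add: norm_diff_sq norm_scaleC_sq cinner_scaleC_right ct N_def)
  also have "\<dots> = (norm x)\<^sup>2 - (cmod c)\<^sup>2 / N"
  proof -
    have "(cmod t)\<^sup>2 * N = (cmod c)\<^sup>2 / N" using cmt N by (simp add: power2_eq_square)
    then show ?thesis by (simp add: tc)
  qed
  finally have "(cmod c)\<^sup>2 \<le> (norm x)\<^sup>2 * N" using N by (simp add: field_simps)
  then have "(cmod c)\<^sup>2 \<le> (norm x * norm y)\<^sup>2" by (simp add: N_def power_mult_distrib)
  then have "cmod c \<le> norm x * norm y" by (rule power2_le_imp_le) simp
  moreover have "cmod (cinner x y) = cmod c" by (simp add: ct)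
  ultimately show ?thesis by simp
qed


lemma riesz:
  fixes f :: "'a::chilbert_space \<Rightarrow> complex"
  assumes add: "\<And>x y. f (x + y) = f x + f y"
    and sc: "\<And>c x. f (c *\<^sub>C x) = c * f x"
    and bd: "\<And>x. cmod (f x) \<le> norm x * C"
  shows "\<exists>z. \<forall>x. f x = cinner z x"
proof (cases "\<forall>x. f x = 0")
  case True then show ?thesis by (intro exI[of _ 0]) simp
next
  case False
  then obtain x1 where x1: "f x1 \<noteq> 0" by blast
  have f0: "f 0 = 0" using sc[of 0 0] by simp
  have fminus: "f (- x) = - f x" for x
    using sc[of "-1" x] by (simp add: scaleC_minus_left scaleC_one)
  have fdiff: "f (x - y) = f x - f y" for x y
    using add[of x "-y"] fminus[of y] by simp
  have fR: "f (r *\<^sub>R x) = complex_of_real r * f x" for r x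
    by (simp add: scaleR_scaleC sc)
  define H where "H = {x. f x = 1}"
  define u where "u = (1 / f x1) *\<^sub>C x1"
  have uH: "u \<in> H" using x1 by (simp add: H_def u_def sc)
  define Q where "Q = (\<lambda>x::'a. (norm x)\<^sup>2) ` H"
  define D where "D = Inf Q"
  have Qne: "Q \<noteq> {}" using uH by (auto simp: Q_def)
  have Qbdd: "bdd_below Q" unfolding Q_def by (rule bdd_belowI[of _ 0]) auto
  have Dle: "D \<le> (norm w)\<^sup>2" if "w \<in> H" for w
    unfolding D_def Q_def by (rule cInf_lower) (use that Qbdd Q_def in auto)
  have "\<exists>x. x \<in> H \<and> (norm x)\<^sup>2 < D + inverse (real (Suc n))" for n
  proof -
    have "Inf Q < D + inverse (real (Suc n))" unfolding D_def by simp
    then obtain q where "q \<in> Q" "q < D + inverse (real (Suc n))"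
      using cInf_less_iff[OF Qne Qbdd] by blast
    then show ?thesis unfolding Q_def by auto
  qed
  then obtain X where X: "\<And>n. X n \<in> H" "\<And>n. (norm (X n))\<^sup>2 < D + inverse (real (Suc n))"
    by metis
  have mid: "(norm (a - b))\<^sup>2 \<le> 2 * (norm a)\<^sup>2 + 2 * (norm b)\<^sup>2 - 4 * D" if "a \<in> H" "b \<in> H" for a b
  proof -
    have "(1/2::real) *\<^sub>R (a + b) \<in> H" using that
      by (simp add: H_def fR add)
    then have "D \<le> (norm ((1/2::real) *\<^sub>R (a + b)))\<^sup>2" by (rule Dle)
    also have "\<dots> = (norm (a + b))\<^sup>2 / 4" by (simp add: power2_eq_square)
    finally have "4 * D \<le> (norm (a + b))\<^sup>2" by simp
    then show ?thesis using parallelogram[of a b] by linarith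
  qed
  have "Cauchy X"
  proof (rule CauchyI)
    fix e :: real assume e: "0 < e"
    obtain M where M: "inverse (real (Suc M)) < e\<^sup>2 / 4"
      using reals_Archimedean[of "e\<^sup>2/4"] e by auto
    have "norm (X m - X n) < e" if "m \<ge> M" "n \<ge> M" for m n
    proof -
      have im: "inverse (real (Suc m)) \<le> inverse (real (Suc M))" using that by (simp add: field_simps)
      have inn: "inverse (real (Suc n)) \<le> inverse (real (Suc M))" using that by (simp add: field_simps)
      have "(norm (X m - X n))\<^sup>2 \<le> 2 * (norm (X m))\<^sup>2 + 2 * (norm (X n))\<^sup>2 - 4 * D"
        using mid X(1) by blast
      also have "\<dots> < 2 * inverse (real (Suc m)) + 2 * inverse (real (Suc n))"
        using X(2)[of m] X(2)[of n] by linarith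
      also have "\<dots> \<le> e\<^sup>2" using im inn M by linarith
      finally have "(norm (X m - X n))\<^sup>2 < e\<^sup>2" .
      then show ?thesis using e by (simp add: power_less_imp_less_base)
    qed
    then show "\<exists>M. \<forall>m\<ge>M. \<forall>n\<ge>M. norm (X m - X n) < e" by blast
  qed
  then obtain z where Xz: "X \<longlonglongrightarrow> z" using Cauchy_convergent_iff convergent_def by blast
  have "f z = 1"
  proof -
    have lim0: "(\<lambda>n. norm (z - X n) * C) \<longlonglongrightarrow> 0"
    proof -
      have "(\<lambda>n. z - X n) \<longlonglongrightarrow> z - z" by (intro tendsto_intros Xz)
      then have "(\<lambda>n. norm (z - X n)) \<longlonglongrightarrow> 0" using tendsto_norm_zero by force
      then show ?thesis using tendsto_mult_left_zero by blast
    qed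
    have "cmod (f z - 1) \<le> norm (z - X n) * C" for n
    proof -
      have "f z - 1 = f (z - X n)" using X(1)[of n] by (simp add: fdiff H_def)
      then show ?thesis using bd by simp
    qed
    then have "cmod (f z - 1) \<le> 0" by (intro LIMSEQ_le_const[OF lim0]) auto
    then show ?thesis by simp
  qed
  then have zH: "z \<in> H" by (simp add: H_def)
  have zmin: "(norm z)\<^sup>2 \<le> (norm w)\<^sup>2" if "w \<in> H" for w
  proof -
    have l1: "(\<lambda>n. (norm (X n))\<^sup>2) \<longlonglongrightarrow> (norm z)\<^sup>2" by (intro tendsto_intros Xz)
    have l2: "(\<lambda>n. D + inverse (real (Suc n))) \<longlonglongrightarrow> D + 0"
      by (intro tendsto_intros LIMSEQ_inverse_real_of_nat)
    have Xle: "\<forall>n. (norm (X n))\<^sup>2 \<le> D + inverse (real (Suc n))" using X(2) less_imp_le by blast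
    have "(norm z)\<^sup>2 \<le> D + 0"
      by (rule tendsto_le[OF _ l2 l1]) (use Xle in \<open>simp_all add: always_eventually\<close>)
    then show ?thesis using Dle[OF that] by linarith
  qed
  have orth: "cinner z y = 0" if "f y = 0" for y
  proof -
    define c where "c = cinner z y"
    define N where "N = (norm y)\<^sup>2"
    define s where "s = 1 / (N + 1)"
    have N: "N \<ge> 0" by (simp add: N_def)
    have s: "s > 0" using N by (simp add: s_def)
    define w where "w = z - (complex_of_real s * cnj c) *\<^sub>C y"
    have "w \<in> H" using zH that by (simp add: w_def H_def fdiff sc)
    then have "(norm z)\<^sup>2 \<le> (norm w)\<^sup>2" by (rule zmin)
    also have "(norm w)\<^sup>2 = (norm z)\<^sup>2 + s\<^sup>2 * (cmod c)\<^sup>2 * N - 2 * s * (cmod c)\<^sup>2"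
    proof -
      have "Re (cinner z ((complex_of_real s * cnj c) *\<^sub>C y)) = s * (cmod c)\<^sup>2"
        using cnj_mult_self[of c] by (simp add: cinner_scaleC_right c_def[symmetric] mult.assoc)
      moreover have "(cmod (complex_of_real s * cnj c))\<^sup>2 = s\<^sup>2 * (cmod c)\<^sup>2"
        using s by (simp add: norm_mult power_mult_distrib)
      ultimately show ?thesis unfolding w_def N_def
        by (simp add: norm_diff_sq norm_scaleC_sq)
    qed
    finally have "2 * s * (cmod c)\<^sup>2 \<le> s * (s * N) * (cmod c)\<^sup>2" by (simp add: power2_eq_square algebra_simps)
    then have h: "2 * (cmod c)\<^sup>2 \<le> (s * N) * (cmod c)\<^sup>2" using s by (simp add: mult.assoc)
    have "s * N \<le> 1" using N by (simp add: s_def)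
    then have "(s * N) * (cmod c)\<^sup>2 \<le> 1 * (cmod c)\<^sup>2" by (intro mult_right_mono) simp_all
    with h have "(cmod c)\<^sup>2 \<le> 0" by linarith
    then show ?thesis by (simp add: c_def)
  qed
  define N where "N = (norm z)\<^sup>2"
  have zne: "z \<noteq> 0" using \<open>f z = 1\<close> f0 by auto
  then have Npos: "N > 0" by (simp add: N_def)
  have "f x = cinner ((1 / N) *\<^sub>R z) x" for x
  proof -
    have "f (x - f x *\<^sub>C z) = 0" using \<open>f z = 1\<close> by (simp add: fdiff sc)
    then have "cinner z (x - f x *\<^sub>C z) = 0" by (rule orth)
    then have "cinner z x = f x * complex_of_real N"
      by (simp add: cinner_diff_right cinner_scaleC_right cinner_self_real N_def)
    then show ?thesis using Npos by (simp add: cinner_scaleR_left)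
  qed
  then show ?thesis by blast
qed



definition hasadj :: "('a::chilbert_space \<Rightarrow> 'a) \<Rightarrow> bool" where
  "hasadj T \<longleftrightarrow> (\<exists>S. \<forall>x y. cinner (T x) y = cinner x (S y))"

lemma hasadjI: "(\<And>x y. cinner (T x) y = cinner x (S y)) \<Longrightarrow> hasadj T"
  unfolding hasadj_def by blast

lemma adj_unique_aux:
  fixes S S' :: "'a::chilbert_space \<Rightarrow> 'a"
  assumes "\<forall>x y. cinner (T x) y = cinner x (S y)" "\<forall>x y. cinner (T x) y = cinner x (S' y)"
  shows "S = S'"
proof
  fix y show "S y = S' y" using assms by (intro cinner_ext_left) metis
qed

lemma adj_eqI:
  assumes "\<forall>x y. cinner (T x) y = cinner x (S y)"
  shows "adj T = S"
  unfolding adj_def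
  by (rule the_equality) (use assms adj_unique_aux in blast)+

lemma adj_char:
  assumes "hasadj T"
  shows "cinner (T x) y = cinner x (adj T y)"
proof -
  obtain S where S: "\<forall>x y. cinner (T x) y = cinner x (S y)" using assms hasadj_def by blast
  then show ?thesis using adj_eqI[OF S] S by simp
qed

lemma adj_char2:
  assumes "hasadj T"
  shows "cinner (adj T y) x = cinner y (T x)"
  using adj_char[OF assms, of x y] by (metis cnj_cinner)

lemma hasadj_add: "hasadj T \<Longrightarrow> T (x + y) = T x + T y"
  by (rule cinner_ext_right) (simp add: adj_char cinner_add_left)
lemma hasadj_scaleC: "hasadj T \<Longrightarrow> T (c *\<^sub>C x) = c *\<^sub>C T x"
  by (rule cinner_ext_right) (simp add: adj_char cinner_scaleC_left)
lemma hasadj_zero: "hasadj T \<Longrightarrow> T 0 = 0"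
  using hasadj_add[of T 0 0] by simp
lemma hasadj_minus: "hasadj T \<Longrightarrow> T (- x) = - T x"
  by (rule cinner_ext_right) (simp add: adj_char cinner_minus_left)
lemma hasadj_diff: "hasadj T \<Longrightarrow> T (x - y) = T x - T y"
  by (rule cinner_ext_right) (simp add: adj_char cinner_diff_left)
lemma hasadj_scaleR: "hasadj T \<Longrightarrow> T (r *\<^sub>R x) = r *\<^sub>R T x"
  by (simp add: scaleR_scaleC hasadj_scaleC)
lemma hasadj_sum: "hasadj T \<Longrightarrow> T (sum f A) = (\<Sum>i\<in>A. T (f i))"
  by (induction A rule: infinite_finite_induct) (simp_all add: hasadj_zero hasadj_add)

lemma hasadj_adj: "hasadj T \<Longrightarrow> hasadj (adj T)"
  by (rule hasadjI[of _ T]) (simp add: adj_char2)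
lemma adj_adj: "hasadj T \<Longrightarrow> adj (adj T) = T"
  by (rule adj_eqI) (simp add: adj_char2)

lemma hasadj_comp: "hasadj S \<Longrightarrow> hasadj T \<Longrightarrow> hasadj (S \<circ> T)"
  by (rule hasadjI[of _ "adj T \<circ> adj S"]) (simp add: adj_char)
lemma adj_comp: "hasadj S \<Longrightarrow> hasadj T \<Longrightarrow> adj (S \<circ> T) = adj T \<circ> adj S"
  by (rule adj_eqI) (simp add: adj_char)

lemma hasadj_plus: "hasadj S \<Longrightarrow> hasadj T \<Longrightarrow> hasadj (S + T)"
  by (rule hasadjI[of _ "adj S + adj T"]) (simp add: adj_char cinner_add_left cinner_add_right)
lemma adj_plus: "hasadj S \<Longrightarrow> hasadj T \<Longrightarrow> adj (S + T) = adj S + adj T"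
  by (rule adj_eqI) (simp add: adj_char cinner_add_left cinner_add_right)

lemma hasadj_uminus: "hasadj S \<Longrightarrow> hasadj (- S)"
  by (rule hasadjI[of _ "- adj S"]) (simp add: adj_char cinner_minus_left cinner_minus_right)
lemma adj_uminus: "hasadj S \<Longrightarrow> adj (- S) = - adj S"
  by (rule adj_eqI) (simp add: adj_char cinner_minus_left cinner_minus_right)

lemma hasadj_minus_op: "hasadj S \<Longrightarrow> hasadj T \<Longrightarrow> hasadj (S - T)"
  by (rule hasadjI[of _ "adj S - adj T"]) (simp add: adj_char cinner_diff_left cinner_diff_right)
lemma adj_minus_op: "hasadj S \<Longrightarrow> hasadj T \<Longrightarrow> adj (S - T) = adj S - adj T"
  by (rule adj_eqI) (simp add: adj_char cinner_diff_left cinner_diff_right)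

lemma hasadj_0: "hasadj (0::'a::chilbert_space \<Rightarrow> 'a)"
  by (rule hasadjI[of _ 0]) simp
lemma adj_0: "adj (0::'a::chilbert_space \<Rightarrow> 'a) = 0"
  by (rule adj_eqI) simp
lemma hasadj_id: "hasadj (id::'a::chilbert_space \<Rightarrow> 'a)"
  by (rule hasadjI[of _ id]) simp
lemma adj_id: "adj (id::'a::chilbert_space \<Rightarrow> 'a) = id"
  by (rule adj_eqI) simp

lemma hasadj_opscale: "hasadj S \<Longrightarrow> hasadj (opscale c S)"
  by (rule hasadjI[of _ "opscale (cnj c) (adj S)"]) (simp add: opscale_def adj_char cinner_scaleC_left cinner_scaleC_right)
lemma adj_opscale: "hasadj S \<Longrightarrow> adj (opscale c S) = opscale (cnj c) (adj S)"
  by (rule adj_eqI) (simp add: opscale_def adj_char cinner_scaleC_left cinner_scaleC_right)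

lemma bounded_hasadj:
  fixes T :: "'a::chilbert_space \<Rightarrow> 'a"
  assumes "bounded_op T"
  shows "hasadj T"
proof -
  obtain C where C: "\<forall>x. norm (T x) \<le> norm x * C" and lin: "clinear T"
    using assms bounded_op_def by blast
  have "\<exists>z. \<forall>x. cinner y (T x) = cinner z x" for y
  proof (rule riesz)
    show "cinner y (T (x1 + x2)) = cinner y (T x1) + cinner y (T x2)" for x1 x2
      using lin by (simp add: clinear_def cinner_add_right)
    show "cinner y (T (c *\<^sub>C x)) = c * cinner y (T x)" for c x
      using lin by (simp add: clinear_def cinner_scaleC_right)
    show "cmod (cinner y (T x)) \<le> norm x * (norm y * C)" for x
    proof -
      have "cmod (cinner y (T x)) \<le> norm y * norm (T x)" by (rule cauchy_schwarz)
      also have "\<dots> \<le> norm y * (norm x * C)" using C by (simp add: mult_left_mono)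
      finally show ?thesis by (simp add: ac_simps)
    qed
  qed
  then obtain Z where Z: "\<forall>y x. cinner y (T x) = cinner (Z y) x" by metis
  show ?thesis unfolding hasadj_def
  proof (intro exI[of _ Z] allI)
    fix x y
    have "cinner (T x) y = cnj (cinner y (T x))" by simp
    also have "\<dots> = cnj (cinner (Z y) x)" using Z by simp
    also have "\<dots> = cinner x (Z y)" by simp
    finally show "cinner (T x) y = cinner x (Z y)" .
  qed
qed

lemma orth_proj_hasadj:
  fixes P :: "'a::chilbert_space \<Rightarrow> 'a"
  assumes "is_orth_proj P M"
  shows "hasadj P" "adj P = P"
proof -
  have h: "cinner (P x) y = cinner (P x) (P y)" for x y
  proof -
    have "cinner (P x) (y - P y) = 0" using assms unfolding is_orth_proj_def by blast
    then show ?thesis by (simp add: cinner_diff_right)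
  qed
  have "cinner (P x) y = cinner x (P y)" for x y
  proof -
    have "cinner x (P y) = cnj (cinner (P y) x)" by simp
    also have "\<dots> = cnj (cinner (P y) (P x))" using h by simp
    also have "\<dots> = cinner (P x) (P y)" by simp
    finally show ?thesis using h by simp
  qed
  then show "hasadj P" "adj P = P" unfolding hasadj_def by (auto intro: adj_eqI)
qed

lemma orth_proj_idem:
  fixes P :: "'a::chilbert_space \<Rightarrow> 'a"
  assumes "is_orth_proj P M" 
  shows "P \<circ> P = P"
proof
  fix x
  have hp: "hasadj P" "adj P = P" using orth_proj_hasadj[OF assms] by auto
  have "cinner z (P (P x)) = cinner z (P x)" for z
  proof -
    have "cinner (P z) (P x - P (P x)) = 0" using assms unfolding is_orth_proj_def by blast
    then have e1: "cinner (P z) (P x) = cinner (P z) (P (P x))" by (simp add: cinner_diff_right)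
    have "cinner (P z) (x - P x) = 0" using assms unfolding is_orth_proj_def by blast
    then have e2: "cinner (P z) x = cinner (P z) (P x)" by (simp add: cinner_diff_right)
    have a: "cinner (P u) v = cinner u (P v)" for u v using adj_char[OF hp(1), of u v] hp(2) by simp
    show ?thesis using e1 e2 a[of z x] a[of z "P x"] by simp
  qed
  then have "P (P x) = P x" by (rule cinner_ext_left)
  then show "(P \<circ> P) x = P x" by simp
qed



typedef (overloaded) 'a aop = "{T::'a::chilbert_space \<Rightarrow> 'a. hasadj T}"
  morphisms op Aop
  using hasadj_id by blast

setup_lifting type_definition_aop

instantiation aop :: (chilbert_space) "{real_algebra, monoid_mult}"
begin
lift_definition zero_aop :: "'a aop" is "0" by (rule hasadj_0)
lift_definition one_aop :: "'a aop" is "id" by (rule hasadj_id)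
lift_definition plus_aop :: "'a aop \<Rightarrow> 'a aop \<Rightarrow> 'a aop" is "(+)" by (rule hasadj_plus)
lift_definition minus_aop :: "'a aop \<Rightarrow> 'a aop \<Rightarrow> 'a aop" is "(-)" by (rule hasadj_minus_op)
lift_definition uminus_aop :: "'a aop \<Rightarrow> 'a aop" is "uminus" by (rule hasadj_uminus)
lift_definition times_aop :: "'a aop \<Rightarrow> 'a aop \<Rightarrow> 'a aop" is "(\<circ>)" by (rule hasadj_comp)
lift_definition scaleR_aop :: "real \<Rightarrow> 'a aop \<Rightarrow> 'a aop" is "\<lambda>r T. opscale (complex_of_real r) T"
  by (rule hasadj_opscale)
instance
proof
  fix a b c :: "'a aop" and r s :: real
  show "a + b + c = a + (b + c)" by transfer (simp add: add.assoc)
  show "a + b = b + a" by transfer (simp add: add.commute)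
  show "0 + a = a" by transfer simp
  show "- a + a = 0" by transfer simp
  show "a - b = a + - b" by transfer simp
  show "a * b * c = a * (b * c)" by transfer (simp add: comp_assoc)
  show "(a + b) * c = a * c + b * c" by transfer (simp add: fun_eq_iff)
  show "a * (b + c) = a * b + a * c" by transfer (simp add: fun_eq_iff hasadj_add)
  show "r *\<^sub>R (a + b) = r *\<^sub>R a + r *\<^sub>R b" by transfer (simp add: fun_eq_iff opscale_def scaleC_add_right)
  show "(r + s) *\<^sub>R a = r *\<^sub>R a + s *\<^sub>R a" by transfer (simp add: fun_eq_iff opscale_def scaleC_add_left)
  show "r *\<^sub>R s *\<^sub>R a = (r * s) *\<^sub>R a" by transfer (simp add: fun_eq_iff opscale_def scaleC_scaleC)
  show "1 *\<^sub>R a = a" by transfer (simp add: fun_eq_iff opscale_def scaleC_one)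
  show "r *\<^sub>R a * b = r *\<^sub>R (a * b)" by transfer (simp add: fun_eq_iff opscale_def)
  show "a * r *\<^sub>R b = r *\<^sub>R (a * b)" by transfer (simp add: fun_eq_iff opscale_def hasadj_scaleC)
  show "1 * a = a" by transfer simp
  show "a * 1 = a" by transfer simp
qed
end

lift_definition dag :: "'a::chilbert_space aop \<Rightarrow> 'a aop" is adj by (rule hasadj_adj)

lemma dag_add[simp]: "dag (a + b) = dag a + dag b" by transfer (simp add: adj_plus)
lemma dag_diff[simp]: "dag (a - b) = dag a - dag b" by transfer (simp add: adj_minus_op)
lemma dag_uminus[simp]: "dag (- a) = - dag a" by transfer (simp add: adj_uminus)
lemma dag_mult[simp]: "dag (a * b) = dag b * dag a" by transfer (simp add: adj_comp)
lemma dag_dag[simp]: "dag (dag a) = a" by transfer (simp add: adj_adj)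
lemma dag_zero[simp]: "dag 0 = 0" by transfer (simp add: adj_0)
lemma dag_one[simp]: "dag 1 = 1" by transfer (simp add: adj_id)
lemma dag_scaleR[simp]: "dag (r *\<^sub>R a) = r *\<^sub>R dag a" by transfer (simp add: adj_opscale)
lemma dag_sum[simp]: "dag (sum f A) = (\<Sum>i\<in>A. dag (f i))"
  by (induction A rule: infinite_finite_induct) simp_all

lemma op_zero[simp]: "op 0 = 0" by transfer simp
lemma op_one[simp]: "op 1 = id" by transfer simp
lemma op_plus[simp]: "op (a + b) = op a + op b" by transfer simp
lemma op_minus[simp]: "op (a - b) = op a - op b" by transfer simp
lemma op_uminus[simp]: "op (- a) = - op a" by transfer simp
lemma op_times[simp]: "op (a * b) = op a \<circ> op b" by transfer simp
lemma op_scaleR[simp]: "op (r *\<^sub>R a) = opscale (complex_of_real r) (op a)" by transfer simp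
lemma op_dag[simp]: "op (dag a) = adj (op a)" by transfer simp
lemma op_sum[simp]: "op (sum f A) = (\<Sum>i\<in>A. op (f i))"
  by (induction A rule: infinite_finite_induct) simp_all
lemma op_Aop: "hasadj T \<Longrightarrow> op (Aop T) = T" by (simp add: Aop_inverse)
lemma op_eq_iff: "op a = op b \<longleftrightarrow> a = b" by (simp add: op_inject)

lemma poly_coeffs:
  fixes A B C :: "'b::real_vector"
  assumes "\<forall>k::real\<ge>0. (k\<^sup>2) *\<^sub>R A + k *\<^sub>R B + C = 0"
  shows "A = 0 \<and> B = 0 \<and> C = 0"
proof -
  have c: "C = 0" using assms[rule_format, of 0] by simp
  have 1: "A + B = 0" using assms[rule_format, of 1] c by simp
  have 2: "4 *\<^sub>R A + 2 *\<^sub>R B = 0" using assms[rule_format, of 2] c by (simp add: power2_eq_square)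
  have "B = - A" using 1 add_eq_0_iff by blast
  then have "2 *\<^sub>R A = 0" using 2 by (simp add: algebra_simps) 
  then have a: "A = 0" by simp
  then show ?thesis using 1 c by simp
qed



lemma ring_goal1:
  fixes y a b y1 p0 :: "'a::chilbert_space aop" and f g :: "nat \<Rightarrow> 'a aop" and I :: "nat set"
  assumes hY: "y + dag y = - (\<Sum>i\<in>I. dag (f i) * f i)"
    and hA: "a + dag a = - (\<Sum>i\<in>I. dag (f i) * g i + dag (g i) * f i)"
    and hB: "b + dag b = - (\<Sum>i\<in>I. dag (g i) * g i)"
    and hZ: "y * y1 * (1 - p0) * a * p0 = (1 - p0) * a * p0"
    and hb: "p0 * a * p0 = 0"
    and hc: "\<forall>i\<in>I. f i * p0 = 0"
    and hp: "dag p0 = p0"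
  shows "p0 * (b - a * y1 * a) * p0 + dag (p0 * (b - a * y1 * a) * p0)
      = - (\<Sum>i\<in>I. dag ((g i - f i * y1 * a) * p0) * ((g i - f i * y1 * a) * p0))"
proof -
  define v where "v = y1 * a * p0"
  define SFF where "SFF = (\<Sum>i\<in>I. dag (f i) * f i)"
  define SFG where "SFG = (\<Sum>i\<in>I. dag (f i) * g i)"
  define SGF where "SGF = (\<Sum>i\<in>I. dag (g i) * f i)"
  define SGG where "SGG = (\<Sum>i\<in>I. dag (g i) * g i)"
  define z1 where "z1 = y * v - a * p0"
  define z2 where "z2 = p0 * SFG"
  define z3 where "z3 = SGF * p0"
  define zY where "zY = y + dag y + SFF"
  define zA where "zA = a + dag a + SFG + SGF"
  define zB where "zB = b + dag b + SGG"
  have z1: "z1 = 0"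
  proof -
    have "y * y1 * (1 - p0) * a * p0 = y * v - y * y1 * (p0 * a * p0)" by (simp add: v_def algebra_simps)
    moreover have "(1 - p0) * a * p0 = a * p0 - p0 * a * p0" by (simp add: algebra_simps)
    ultimately show ?thesis using hZ hb by (simp add: z1_def)
  qed
  have pf: "p0 * dag (f i) = 0" if "i \<in> I" for i
  proof -
    have "dag (f i * p0) = 0" using hc that by simp
    then show ?thesis using hp by simp
  qed
  have z2: "z2 = 0" unfolding z2_def SFG_def sum_distrib_left
    by (rule sum.neutral) (simp add: mult.assoc[symmetric] pf)
  have z3: "z3 = 0" unfolding z3_def SGF_def sum_distrib_right
    by (rule sum.neutral) (simp add: mult.assoc hc)
  have zY: "zY = 0" using hY by (simp add: zY_def SFF_def)
  have zA: "zA = 0" using hA by (simp add: zA_def SFG_def SGF_def sum.distrib add.assoc)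
  have zB: "zB = 0" using hB by (simp add: zB_def SGG_def)
  have dv: "dag v = p0 * dag a * dag y1" by (simp add: v_def hp mult.assoc)
  have L: "(\<Sum>i\<in>I. dag ((g i - f i * y1 * a) * p0) * ((g i - f i * y1 * a) * p0))
     = p0 * SGG * p0 - p0 * SGF * v - dag v * SFG * p0 + dag v * SFF * v"
  proof -
    have "(\<Sum>i\<in>I. dag ((g i - f i * y1 * a) * p0) * ((g i - f i * y1 * a) * p0))
      = (\<Sum>i\<in>I. p0 * (dag (g i) * g i) * p0 - p0 * (dag (g i) * f i) * v
            - dag v * (dag (f i) * g i) * p0 + dag v * (dag (f i) * f i) * v)"
      by (rule sum.cong) (simp_all add: dv v_def hp algebra_simps)
    also have "\<dots> = p0 * SGG * p0 - p0 * SGF * v - dag v * SFG * p0 + dag v * SFF * v"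
      by (simp add: SGG_def SGF_def SFG_def SFF_def sum_subtractf sum.distrib sum_distrib_left sum_distrib_right)
    finally show ?thesis .
  qed
  have key: "p0 * (b - a * y1 * a) * p0 + dag (p0 * (b - a * y1 * a) * p0)
      + (p0 * SGG * p0 - p0 * SGF * v - dag v * SFG * p0 + dag v * SFF * v)
      = p0 * zB * p0 - p0 * zA * v + z2 * v - dag v * zA * p0 + dag v * z3 + dag v * zY * v
        - dag v * z1 - dag z1 * v"
    unfolding zA_def zB_def zY_def z1_def z2_def z3_def dv
    by (simp add: v_def hp algebra_simps)
  have "p0 * (b - a * y1 * a) * p0 + dag (p0 * (b - a * y1 * a) * p0)
      + (\<Sum>i\<in>I. dag ((g i - f i * y1 * a) * p0) * ((g i - f i * y1 * a) * p0)) = 0"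
    unfolding L key z1 z2 z3 zY zA zB by simp
  then show ?thesis by (simp add: eq_neg_iff_add_eq_0)
qed



lemma ring_sums:
  fixes w :: "nat \<Rightarrow> nat \<Rightarrow> 'a::chilbert_space aop" and f :: "nat \<Rightarrow> 'a aop" and I :: "nat set"
  assumes fin: "finite I"
    and hW1: "\<forall>i\<in>I. \<forall>j\<in>I. (\<Sum>l\<in>I. w i l * dag (w j l)) = (if i = j then 1 else 0)"
    and MD: "\<And>j. M j = (\<Sum>l\<in>I. dag (f l) * w l j)"
  shows "\<And>j. j \<in> I \<Longrightarrow> (\<Sum>l\<in>I. M l * dag (w j l)) = dag (f j)"
    and "\<And>i. i \<in> I \<Longrightarrow> (\<Sum>l\<in>I. w i l * dag (M l)) = f i"
    and "(\<Sum>l\<in>I. M l * dag (M l)) = (\<Sum>l\<in>I. dag (f l) * f l)"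
proof -
  show a: "(\<Sum>l\<in>I. M l * dag (w j l)) = dag (f j)" if j: "j \<in> I" for j
  proof -
    have "(\<Sum>l\<in>I. M l * dag (w j l)) = (\<Sum>l\<in>I. \<Sum>m\<in>I. dag (f m) * (w m l * dag (w j l)))"
      by (simp add: MD sum_distrib_right mult.assoc)
    also have "\<dots> = (\<Sum>m\<in>I. \<Sum>l\<in>I. dag (f m) * (w m l * dag (w j l)))" by (rule sum.swap)
    also have "\<dots> = (\<Sum>m\<in>I. dag (f m) * (\<Sum>l\<in>I. w m l * dag (w j l)))" by (simp add: sum_distrib_left)
    also have "\<dots> = (\<Sum>m\<in>I. dag (f m) * (if m = j then 1 else 0))"
      by (rule sum.cong) (use hW1 j in auto)
    also have "\<dots> = dag (f j)" using fin j by (simp add: if_distrib cong: if_cong)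
    finally show ?thesis .
  qed
  show b: "(\<Sum>l\<in>I. w i l * dag (M l)) = f i" if i: "i \<in> I" for i
  proof -
    have "dag (\<Sum>l\<in>I. M l * dag (w i l)) = dag (dag (f i))" using a[OF i] by simp
    then show ?thesis by simp
  qed
  have "(\<Sum>l\<in>I. M l * dag (M l)) = (\<Sum>l\<in>I. \<Sum>m\<in>I. dag (f m) * (w m l * dag (M l)))"
    by (simp add: MD sum_distrib_right mult.assoc)
  also have "\<dots> = (\<Sum>m\<in>I. \<Sum>l\<in>I. dag (f m) * (w m l * dag (M l)))" by (rule sum.swap)
  also have "\<dots> = (\<Sum>m\<in>I. dag (f m) * (\<Sum>l\<in>I. w m l * dag (M l)))" by (simp add: sum_distrib_left)
  also have "\<dots> = (\<Sum>m\<in>I. dag (f m) * f m)" by (rule sum.cong) (simp_all add: b)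
  finally show "(\<Sum>l\<in>I. M l * dag (M l)) = (\<Sum>l\<in>I. dag (f l) * f l)" .
qed


lemma commute_p0:
  fixes A B p0 :: "'a::chilbert_space aop"
  assumes "(1 - p0) * (A * p0) = 0" "p0 * A * (1 - p0) = 0" "(1 - p0) * (B * p0) = 0"
    and hp: "dag p0 = p0"
  shows "A * p0 * dag B = p0 * (A * dag B) * p0"
proof -
  define z1 where "z1 = (1 - p0) * (A * p0)"
  define z2 where "z2 = p0 * A * (1 - p0)"
  define z3 where "z3 = (1 - p0) * (B * p0)"
  have "A * p0 * dag B - p0 * (A * dag B) * p0 = z1 * dag B + p0 * A * dag z3 - z2 * dag B * p0"
    unfolding z1_def z2_def z3_def by (simp add: hp algebra_simps)
  then show ?thesis using assms by (simp add: z1_def z2_def z3_def)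
qed

lemma ring_goal2:
  fixes w :: "nat \<Rightarrow> nat \<Rightarrow> 'a::chilbert_space aop" and f :: "nat \<Rightarrow> 'a aop" and I :: "nat set"
    and y y1 p0 :: "'a aop"
  assumes fin: "finite I"
    and hW1: "\<forall>i\<in>I. \<forall>j\<in>I. (\<Sum>l\<in>I. w i l * dag (w j l)) = (if i = j then 1 else 0)"
    and MD: "\<And>j. M j = (\<Sum>l\<in>I. dag (f l) * w l j)"
    and StD: "\<And>i j. St i j = w i j + f i * y1 * M j"
    and hY: "y + dag y = - (\<Sum>i\<in>I. dag (f i) * f i)"
    and hc: "\<forall>i\<in>I. f i * p0 = 0"
    and hp: "dag p0 = p0" and hpp: "p0 * p0 = p0"
    and hd: "\<forall>i\<in>I. \<forall>j\<in>I. p0 * St i j * (1 - p0) = 0"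
    and h4: "\<forall>i\<in>I. \<forall>j\<in>I. (1 - p0) * (St i j * p0) = 0"
    and hX: "\<forall>i\<in>I. p0 * f i * (1 - p0) * y1 * y = p0 * f i * (1 - p0)"
    and i: "i \<in> I" and j: "j \<in> I"
  shows "(\<Sum>l\<in>I. St i l * p0 * dag (St j l * p0)) = (if i = j then p0 else 0)"
proof -
  note sums = ring_sums[OF fin hW1 MD]
  define SFF where "SFF = (\<Sum>i\<in>I. dag (f i) * f i)"
  define E where "E = (if i = j then 1 else (0::'a aop))"
  have "(\<Sum>l\<in>I. St i l * p0 * dag (St j l * p0)) = (\<Sum>l\<in>I. p0 * (St i l * dag (St j l)) * p0)"
  proof (rule sum.cong)
    fix l assume l: "l \<in> I"
    have "St i l * p0 * dag (St j l * p0) = St i l * p0 * dag (St j l)"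
      by (simp add: hp) (metis hpp mult.assoc)
    also have "\<dots> = p0 * (St i l * dag (St j l)) * p0"
      by (rule commute_p0) (use h4 hd i j l hp in auto)
    finally show "St i l * p0 * dag (St j l * p0) = p0 * (St i l * dag (St j l)) * p0" .
  qed simp
  also have "\<dots> = p0 * (\<Sum>l\<in>I. St i l * dag (St j l)) * p0"
    by (simp add: sum_distrib_left sum_distrib_right)
  also have "(\<Sum>l\<in>I. St i l * dag (St j l)) = (\<Sum>l\<in>I. w i l * dag (w j l))
      + f i * y1 * (\<Sum>l\<in>I. M l * dag (w j l)) + (\<Sum>l\<in>I. w i l * dag (M l)) * dag y1 * dag (f j)
      + f i * y1 * (\<Sum>l\<in>I. M l * dag (M l)) * dag y1 * dag (f j)"
    by (simp add: StD algebra_simps sum.distrib sum_distrib_left sum_distrib_right)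
  also have "\<dots> = E + f i * y1 * dag (f j) + f i * dag y1 * dag (f j) + f i * y1 * SFF * dag y1 * dag (f j)"
    using sums i j hW1 by (simp add: SFF_def E_def)
  finally have eq: "(\<Sum>l\<in>I. St i l * p0 * dag (St j l * p0))
     = p0 * (E + f i * y1 * dag (f j) + f i * dag y1 * dag (f j) + f i * y1 * SFF * dag y1 * dag (f j)) * p0" .
  have zX: "p0 * f k * y1 * y - p0 * f k = 0" if k: "k \<in> I" for k
  proof -
    have "p0 * f k * y1 * y - p0 * f k = (p0 * f k * (1 - p0) * y1 * y - p0 * f k * (1 - p0))
        + p0 * (f k * p0) * y1 * y - p0 * (f k * p0)"
      by (simp add: algebra_simps)
    then show ?thesis using hX hc k by simp
  qed
  define zY where "zY = y + dag y + SFF"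
  have zY: "zY = 0" using hY by (simp add: zY_def SFF_def)
  define zi where "zi = p0 * f i * y1 * y - p0 * f i"
  define zj where "zj = p0 * f j * y1 * y - p0 * f j"
  have "p0 * (E + f i * y1 * dag (f j) + f i * dag y1 * dag (f j) + f i * y1 * SFF * dag y1 * dag (f j)) * p0
      = p0 * E * p0 + p0 * f i * y1 * zY * dag y1 * dag (f j) * p0 - zi * dag y1 * dag (f j) * p0 - p0 * f i * y1 * dag zj"
    unfolding zY_def zi_def zj_def by (simp add: hp algebra_simps)
  also have "\<dots> = p0 * E * p0" using zX[OF i] zX[OF j] zY by (simp add: zi_def zj_def)
  also have "\<dots> = (if i = j then p0 else 0)" by (simp add: E_def hpp)
  finally show ?thesis using eq by simp
qed

lemma ring_goal3:
  fixes w :: "nat \<Rightarrow> nat \<Rightarrow> 'a::chilbert_space aop" and f :: "nat \<Rightarrow> 'a aop" and I :: "nat set"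
    and y y1 p0 :: "'a aop"
  assumes fin: "finite I"
    and hW2: "\<forall>i\<in>I. \<forall>j\<in>I. (\<Sum>l\<in>I. dag (w l i) * w l j) = (if i = j then 1 else 0)"
    and MD: "\<And>j. M j = (\<Sum>l\<in>I. dag (f l) * w l j)"
    and StD: "\<And>i j. St i j = w i j + f i * y1 * M j"
    and hY: "y + dag y = - (\<Sum>i\<in>I. dag (f i) * f i)"
    and hc: "\<forall>i\<in>I. f i * p0 = 0"
    and hp: "dag p0 = p0" and hpp: "p0 * p0 = p0"
    and hZ2: "\<forall>j\<in>I. y * y1 * (1 - p0) * M j * p0 = (1 - p0) * M j * p0"
    and i: "i \<in> I" and j: "j \<in> I"
  shows "(\<Sum>l\<in>I. dag (St l i * p0) * (St l j * p0)) = (if i = j then p0 else 0)"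
proof -
  define SFF where "SFF = (\<Sum>i\<in>I. dag (f i) * f i)"
  define E where "E = (if i = j then 1 else (0::'a aop))"
  have pM: "p0 * M k = 0" for k
  proof -
    have "p0 * M k = (\<Sum>l\<in>I. (p0 * dag (f l)) * w l k)" by (simp add: MD sum_distrib_left mult.assoc)
    also have "\<dots> = 0"
    proof (rule sum.neutral, rule ballI)
      fix l assume l: "l \<in> I"
      have "dag (f l * p0) = 0" using hc l by simp
      then show "p0 * dag (f l) * w l k = 0" using hp by simp
    qed
    finally show ?thesis .
  qed
  have "(\<Sum>l\<in>I. dag (St l i * p0) * (St l j * p0)) = p0 * (\<Sum>l\<in>I. dag (St l i) * St l j) * p0"
    by (simp add: hp sum_distrib_left sum_distrib_right mult.assoc)
  also have "(\<Sum>l\<in>I. dag (St l i) * St l j) = (\<Sum>l\<in>I. dag (w l i) * w l j)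
      + dag (\<Sum>l\<in>I. dag (f l) * w l i) * y1 * M j + dag (M i) * dag y1 * (\<Sum>l\<in>I. dag (f l) * w l j)
      + dag (M i) * dag y1 * SFF * y1 * M j"
    by (simp add: StD SFF_def algebra_simps sum.distrib sum_distrib_left sum_distrib_right)
  also have "\<dots> = E + dag (M i) * y1 * M j + dag (M i) * dag y1 * M j + dag (M i) * dag y1 * SFF * y1 * M j"
    using hW2 i j by (simp add: E_def MD[symmetric])
  finally have eq: "(\<Sum>l\<in>I. dag (St l i * p0) * (St l j * p0))
     = p0 * (E + dag (M i) * y1 * M j + dag (M i) * dag y1 * M j + dag (M i) * dag y1 * SFF * y1 * M j) * p0" .
  have zZ: "y * y1 * M k * p0 - M k * p0 = 0" if k: "k \<in> I" for k
  proof -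
    have "y * y1 * M k * p0 - M k * p0 = (y * y1 * (1 - p0) * M k * p0 - (1 - p0) * M k * p0)
        + y * y1 * (p0 * M k) * p0 - (p0 * M k) * p0"
      by (simp add: algebra_simps)
    then show ?thesis using hZ2 k pM by simp
  qed
  define zY where "zY = y + dag y + SFF"
  have zY: "zY = 0" using hY by (simp add: zY_def SFF_def)
  define zi where "zi = y * y1 * M i * p0 - M i * p0"
  define zj where "zj = y * y1 * M j * p0 - M j * p0"
  have "p0 * (E + dag (M i) * y1 * M j + dag (M i) * dag y1 * M j + dag (M i) * dag y1 * SFF * y1 * M j) * p0
      = p0 * E * p0 + p0 * dag (M i) * dag y1 * zY * y1 * M j * p0 - p0 * dag (M i) * dag y1 * zj - dag zi * y1 * M j * p0"
    unfolding zY_def zi_def zj_def by (simp add: hp algebra_simps)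
  also have "\<dots> = p0 * E * p0" using zZ[OF i] zZ[OF j] zY by (simp add: zi_def zj_def)
  also have "\<dots> = (if i = j then p0 else 0)" by (simp add: E_def hpp)
  finally show ?thesis using eq by simp
qed



theorem lemma2p5:
  fixes n :: nat
    and Kk :: "real \<Rightarrow> ('h::chilbert_space \<Rightarrow> 'h)"
    and Lk :: "real \<Rightarrow> nat \<Rightarrow> ('h \<Rightarrow> 'h)"
    and Sk :: "real \<Rightarrow> nat \<Rightarrow> nat \<Rightarrow> ('h \<Rightarrow> 'h)"
    and Y A B Y1inv P0 P1 K :: "'h \<Rightarrow> 'h"
    and F G L :: "nat \<Rightarrow> ('h \<Rightarrow> 'h)"
    and W S :: "nat \<Rightarrow> nat \<Rightarrow> ('h \<Rightarrow> 'h)"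
  assumes bdd: "bounded_op Y" "bounded_op A" "bounded_op B" "bounded_op Y1inv"
    and bddF: "\<forall>i\<in>{1..n}. bounded_op (F i)"
    and bddG: "\<forall>i\<in>{1..n}. bounded_op (G i)"
    and bddW: "\<forall>i\<in>{1..n}. \<forall>j\<in>{1..n}. bounded_op (W i j)"
    \<comment> \<open>Assumption 1\<close>
    and A1K: "\<forall>k\<ge>0. Kk k + adj (Kk k) = - (\<Sum>i\<in>{1..n}. adj (Lk k i) \<circ> Lk k i)"
    and A1S1: "\<forall>k\<ge>0. \<forall>i\<in>{1..n}. \<forall>j\<in>{1..n}.
                 (\<Sum>l\<in>{1..n}. Sk k i l \<circ> adj (Sk k j l)) = kdelta i j id"
    and A1S2: "\<forall>k\<ge>0. \<forall>i\<in>{1..n}. \<forall>j\<in>{1..n}.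
                 (\<Sum>l\<in>{1..n}. adj (Sk k l i) \<circ> Sk k l j) = kdelta i j id"
    \<comment> \<open>Assumption 2\<close>
    and A2K: "\<forall>k\<ge>0. Kk k = opscale (complex_of_real (k\<^sup>2)) Y + opscale (complex_of_real k) A + B"
    and A2L: "\<forall>k\<ge>0. \<forall>i\<in>{1..n}. Lk k i = opscale (complex_of_real k) (F i) + G i"
    and A2S: "\<forall>k\<ge>0. \<forall>i\<in>{1..n}. \<forall>j\<in>{1..n}. Sk k i j = W i j"
    \<comment> \<open>the projections\<close>
    and P0: "is_orth_proj P0 (opker Y)"
    and P1: "P1 = id - P0"
    \<comment> \<open>Assumption 3\<close>
    and A3comm: "P1 \<circ> Y1inv = Y1inv \<circ> P1"
    and A3Z1: "Y \<circ> Y1inv \<circ> P1 \<circ> A \<circ> P0 = P1 \<circ> A \<circ> P0"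
    and A3Z2: "\<forall>j\<in>{1..n}. Y \<circ> Y1inv \<circ> P1 \<circ> (\<Sum>i\<in>{1..n}. adj (F i) \<circ> W i j) \<circ> P0
                  = P1 \<circ> (\<Sum>i\<in>{1..n}. adj (F i) \<circ> W i j) \<circ> P0"
    and A3X: "\<forall>X \<in> {A, B} \<union> F ` {1..n} \<union> G ` {1..n}
                 \<union> {W i j |i j. i \<in> {1..n} \<and> j \<in> {1..n}}
                 \<union> {(\<Sum>i\<in>{1..n}. adj (G i) \<circ> W i j) |j. j \<in> {1..n}}
                 \<union> {F i \<circ> Y1inv \<circ> F j |i j. i \<in> {1..n} \<and> j \<in> {1..n}}
                 \<union> {F i \<circ> Y1inv \<circ> A |i. i \<in> {1..n}}
                 \<union> {(\<Sum>l\<in>{1..n}. F i \<circ> Y1inv \<circ> adj (F l) \<circ> W l j) |i j. i \<in> {1..n} \<and> j \<in> {1..n}}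
                 \<union> {A \<circ> Y1inv \<circ> A}
                 \<union> {A \<circ> Y1inv \<circ> F i |i. i \<in> {1..n}}
                 \<union> {(\<Sum>l\<in>{1..n}. A \<circ> Y1inv \<circ> adj (F l) \<circ> W l j) |j. j \<in> {1..n}}.
               P0 \<circ> X \<circ> P1 \<circ> Y1inv \<circ> Y = P0 \<circ> X \<circ> P1"
    and A3a: "P0 \<circ> Y \<circ> P1 = 0"
    and A3b: "P0 \<circ> A \<circ> P0 = 0"
    and A3c: "\<forall>i\<in>{1..n}. F i \<circ> P0 = 0"
    and A3d: "\<forall>i\<in>{1..n}. \<forall>j\<in>{1..n}.
                P0 \<circ> (\<Sum>l\<in>{1..n}. (kdelta i l id + (F i \<circ> Y1inv \<circ> adj (F l))) \<circ> W l j) \<circ> P1 = 0"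
    \<comment> \<open>definitions of K, L_i, S_ij\<close>
    and Kdef: "K = P0 \<circ> (B - (A \<circ> Y1inv \<circ> A)) \<circ> P0"
    and Ldef: "L = (\<lambda>i. (G i - (F i \<circ> Y1inv \<circ> A)) \<circ> P0)"
    and Sdef: "S = (\<lambda>i j. (\<Sum>l\<in>{1..n}. (kdelta i l id + (F i \<circ> Y1inv \<circ> adj (F l))) \<circ> W l j) \<circ> P0)"
    \<comment> \<open>Assumption 4\<close>
    and A4L: "\<forall>i\<in>{1..n}. P1 \<circ> L i = 0"
    and A4S: "\<forall>i\<in>{1..n}. \<forall>j\<in>{1..n}. P1 \<circ> S i j = 0"
  shows "K + adj K = - (\<Sum>i\<in>{1..n}. adj (L i) \<circ> L i)
    \<and> (\<forall>i\<in>{1..n}. \<forall>j\<in>{1..n}. (\<Sum>l\<in>{1..n}. S i l \<circ> adj (S j l)) = kdelta i j P0)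
    \<and> (\<forall>i\<in>{1..n}. \<forall>j\<in>{1..n}. (\<Sum>l\<in>{1..n}. adj (S l i) \<circ> S l j) = kdelta i j P0)"

proof -
  define I where "I = {1..n}"
  have fin: "finite I" by (simp add: I_def)
  note bI = bddF bddG bddW
  have hY: "hasadj Y" "hasadj A" "hasadj B" "hasadj Y1inv"
    using bdd by (auto intro: bounded_hasadj)
  have hF: "\<And>i. i \<in> I \<Longrightarrow> hasadj (F i)" using bddF by (auto simp: I_def intro: bounded_hasadj)
  have hG: "\<And>i. i \<in> I \<Longrightarrow> hasadj (G i)" using bddG by (auto simp: I_def intro: bounded_hasadj)
  have hW: "\<And>i j. i \<in> I \<Longrightarrow> j \<in> I \<Longrightarrow> hasadj (W i j)" using bddW by (auto simp: I_def intro: bounded_hasadj)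
  have hP0: "hasadj P0" "adj P0 = P0" using orth_proj_hasadj[OF P0] by auto
  have P0P0: "P0 \<circ> P0 = P0" using orth_proj_idem[OF P0] .
  define y where "y = Aop Y"
  define a where "a = Aop A"
  define b where "b = Aop B"
  define y1 where "y1 = Aop Y1inv"
  define p0 where "p0 = Aop P0"
  define f where "f = (\<lambda>i. Aop (F i))"
  define g where "g = (\<lambda>i. Aop (G i))"
  define w where "w = (\<lambda>i j. Aop (W i j))"
  have opy: "op y = Y" "op a = A" "op b = B" "op y1 = Y1inv" "op p0 = P0"
    using hY hP0 by (simp_all add: y_def a_def b_def y1_def p0_def op_Aop)
  have opf: "\<And>i. i \<in> I \<Longrightarrow> op (f i) = F i" using hF by (simp add: f_def op_Aop)
  have opg: "\<And>i. i \<in> I \<Longrightarrow> op (g i) = G i" using hG by (simp add: g_def op_Aop)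
  have opw: "\<And>i j. i \<in> I \<Longrightarrow> j \<in> I \<Longrightarrow> op (w i j) = W i j" using hW by (simp add: w_def op_Aop)
  have opif: "\<And>c u v. op (if c then u else v) = (if c then op u else op v)" by simp
  have opP1: "op (1 - p0) = P1" using opy by (simp add: P1)
  note opsimps = opy opf opg opw opif P1
  have hp: "dag p0 = p0" using hP0 opy by (simp add: op_eq_iff[symmetric])
  have hpp: "p0 * p0 = p0" using P0P0 opy by (simp add: op_eq_iff[symmetric])

  have hW1: "\<forall>i\<in>I. \<forall>j\<in>I. (\<Sum>l\<in>I. w i l * dag (w j l)) = (if i = j then 1 else 0)"
  proof (intro ballI)
    fix i j assume i: "i \<in> I" and j: "j \<in> I"
    have "(\<Sum>l\<in>I. Sk 0 i l \<circ> adj (Sk 0 j l)) = kdelta i j id" using A1S1 i j by (simp add: I_def)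
    moreover have "(\<Sum>l\<in>I. Sk 0 i l \<circ> adj (Sk 0 j l)) = (\<Sum>l\<in>I. W i l \<circ> adj (W j l))"
      using A2S i j by (intro sum.cong) (simp_all add: I_def)
    ultimately have "op (\<Sum>l\<in>I. w i l * dag (w j l)) = op (if i = j then 1 else 0)"
      using i j by (simp add: opsimps kdelta_def)
    then show "(\<Sum>l\<in>I. w i l * dag (w j l)) = (if i = j then 1 else 0)" by (simp only: op_eq_iff)
  qed
  have hW2: "\<forall>i\<in>I. \<forall>j\<in>I. (\<Sum>l\<in>I. dag (w l i) * w l j) = (if i = j then 1 else 0)"
  proof (intro ballI)
    fix i j assume i: "i \<in> I" and j: "j \<in> I"
    have "(\<Sum>l\<in>I. adj (Sk 0 l i) \<circ> Sk 0 l j) = kdelta i j id" using A1S2 i j by (simp add: I_def)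
    moreover have "(\<Sum>l\<in>I. adj (Sk 0 l i) \<circ> Sk 0 l j) = (\<Sum>l\<in>I. adj (W l i) \<circ> W l j)"
      using A2S i j by (intro sum.cong) (simp_all add: I_def)
    ultimately have "op (\<Sum>l\<in>I. dag (w l i) * w l j) = op (if i = j then 1 else 0)"
      using i j by (simp add: opsimps kdelta_def)
    then show "(\<Sum>l\<in>I. dag (w l i) * w l j) = (if i = j then 1 else 0)" by (simp only: op_eq_iff)
  qed
  have hZ: "y * y1 * (1 - p0) * a * p0 = (1 - p0) * a * p0"
    using A3Z1 by (simp add: op_eq_iff[symmetric] opsimps comp_assoc)
  have hb: "p0 * a * p0 = 0"
    using A3b by (simp add: op_eq_iff[symmetric] opsimps comp_assoc)
  have hc: "\<forall>i\<in>I. f i * p0 = 0"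
    using A3c by (simp add: op_eq_iff[symmetric] opsimps comp_assoc I_def)

  define SFF where "SFF = (\<Sum>i\<in>I. dag (f i) * f i)"
  define SFG where "SFG = (\<Sum>i\<in>I. dag (f i) * g i + dag (g i) * f i)"
  define SGG where "SGG = (\<Sum>i\<in>I. dag (g i) * g i)"
  have poly: "\<forall>k::real\<ge>0. (k\<^sup>2) *\<^sub>R (y + dag y + SFF) + k *\<^sub>R (a + dag a + SFG) + (b + dag b + SGG) = 0"
  proof (intro allI impI)
    fix k :: real assume k: "k \<ge> 0"
    define kk where "kk = (k\<^sup>2) *\<^sub>R y + k *\<^sub>R a + b"
    define ll where "ll = (\<lambda>i. k *\<^sub>R f i + g i)"
    have K1: "Kk k = op kk" using A2K k by (simp add: kk_def opsimps)
    have L1: "\<And>i. i \<in> I \<Longrightarrow> Lk k i = op (ll i)" using A2L k by (simp add: ll_def opsimps I_def)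
    have "Kk k + adj (Kk k) = - (\<Sum>i\<in>I. adj (Lk k i) \<circ> Lk k i)" using A1K k by (simp add: I_def)
    moreover have "(\<Sum>i\<in>I. adj (Lk k i) \<circ> Lk k i) = (\<Sum>i\<in>I. adj (op (ll i)) \<circ> op (ll i))"
      using L1 by (intro sum.cong) simp_all
    ultimately have "op (kk + dag kk) = op (- (\<Sum>i\<in>I. dag (ll i) * ll i))"
      using K1 by simp
    then have e: "kk + dag kk = - (\<Sum>i\<in>I. dag (ll i) * ll i)" by (simp only: op_eq_iff)
    have t: "dag (ll i) * ll i = (k\<^sup>2) *\<^sub>R (dag (f i) * f i) + k *\<^sub>R (dag (f i) * g i + dag (g i) * f i) + dag (g i) * g i" for i
      by (simp add: ll_def algebra_simps power2_eq_square)
    have "(\<Sum>i\<in>I. dag (ll i) * ll i) = (k\<^sup>2) *\<^sub>R SFF + k *\<^sub>R SFG + SGG"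
      by (simp add: t sum.distrib scaleR_sum_right scaleR_add_right SFF_def SFG_def SGG_def)
    then show "(k\<^sup>2) *\<^sub>R (y + dag y + SFF) + k *\<^sub>R (a + dag a + SFG) + (b + dag b + SGG) = 0"
      using e by (simp add: kk_def algebra_simps)
  qed
  have coef: "y + dag y + SFF = 0" "a + dag a + SFG = 0" "b + dag b + SGG = 0"
    using poly_coeffs[OF poly] by auto
  have hYr: "y + dag y = - (\<Sum>i\<in>I. dag (f i) * f i)" using coef(1) by (simp add: SFF_def eq_neg_iff_add_eq_0)
  have hAr: "a + dag a = - (\<Sum>i\<in>I. dag (f i) * g i + dag (g i) * f i)" using coef(2) by (simp add: SFG_def eq_neg_iff_add_eq_0)
  have hBr: "b + dag b = - (\<Sum>i\<in>I. dag (g i) * g i)" using coef(3) by (simp add: SGG_def eq_neg_iff_add_eq_0)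

  define kk where "kk = p0 * (b - a * y1 * a) * p0"
  define ll where "ll = (\<lambda>i. (g i - f i * y1 * a) * p0)"
  have Kop: "K = op kk" using Kdef by (simp add: kk_def opsimps)
  have Lop: "\<And>i. i \<in> I \<Longrightarrow> L i = op (ll i)" using Ldef by (simp add: ll_def opsimps)
  have r1: "kk + dag kk = - (\<Sum>i\<in>I. dag (ll i) * ll i)"
    unfolding kk_def ll_def by (rule ring_goal1[OF hYr hAr hBr hZ hb hc hp])
  have G1: "K + adj K = - (\<Sum>i\<in>{1..n}. adj (L i) \<circ> L i)"
  proof -
    have "(\<Sum>i\<in>{1..n}. adj (L i) \<circ> L i) = (\<Sum>i\<in>I. adj (op (ll i)) \<circ> op (ll i))"
      using Lop by (intro sum.cong) (simp_all add: I_def)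
    also have "\<dots> = op (\<Sum>i\<in>I. dag (ll i) * ll i)" by simp
    finally show ?thesis using arg_cong[OF r1, of op] Kop by simp
  qed

  define M where "M = (\<lambda>j. \<Sum>l\<in>I. dag (f l) * w l j)"
  define St where "St = (\<lambda>i j. w i j + f i * y1 * M j)"
  define T where "T = (\<lambda>i j. \<Sum>l\<in>I. ((if i = l then 1 else 0) + f i * y1 * dag (f l)) * w l j)"
  have TSt: "T i j = St i j" if i: "i \<in> I" for i j
  proof -
    have "T i j = (\<Sum>l\<in>I. (if i = l then w l j else 0)) + (\<Sum>l\<in>I. f i * y1 * (dag (f l) * w l j))"
      by (simp add: T_def algebra_simps sum.distrib) (rule sum.cong, auto)
    also have "\<dots> = St i j" using fin i by (simp add: St_def M_def sum_distrib_left)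
    finally show ?thesis .
  qed
  have Top: "op (T i j) = (\<Sum>l\<in>{1..n}. (kdelta i l id + (F i \<circ> Y1inv \<circ> adj (F l))) \<circ> W l j)"
    if i: "i \<in> I" and j: "j \<in> I" for i j
    unfolding T_def op_sum using i j unfolding I_def by (intro sum.cong) (auto simp: opsimps[unfolded I_def] kdelta_def)
  have Sop: "S i j = op (St i j * p0)" if i: "i \<in> I" and j: "j \<in> I" for i j
    using Top[OF i j] TSt[OF i] by (simp add: Sdef opsimps)
  have hd: "\<forall>i\<in>I. \<forall>j\<in>I. p0 * St i j * (1 - p0) = 0"
  proof (intro ballI)
    fix i j assume i: "i \<in> I" and j: "j \<in> I"
    have "op (p0 * T i j * (1 - p0)) = op 0"
      using A3d i j Top[OF i j] by (simp add: opsimps I_def)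
    then show "p0 * St i j * (1 - p0) = 0" using TSt[OF i] by (simp only: op_eq_iff)
  qed
  have h4: "\<forall>i\<in>I. \<forall>j\<in>I. (1 - p0) * (St i j * p0) = 0"
  proof (intro ballI)
    fix i j assume i: "i \<in> I" and j: "j \<in> I"
    have "P1 \<circ> S i j = 0" using A4S i j by (simp add: I_def)
    then have "op ((1 - p0) * (St i j * p0)) = op 0"
      using Sop[OF i j] by (simp add: opsimps)
    then show "(1 - p0) * (St i j * p0) = 0" by (simp only: op_eq_iff)
  qed
  have hX: "\<forall>i\<in>I. p0 * f i * (1 - p0) * y1 * y = p0 * f i * (1 - p0)"
  proof (intro ballI)
    fix i assume i: "i \<in> I"
    have "P0 \<circ> F i \<circ> P1 \<circ> Y1inv \<circ> Y = P0 \<circ> F i \<circ> P1"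
      using A3X i by (simp add: I_def)
    then have "op (p0 * f i * (1 - p0) * y1 * y) = op (p0 * f i * (1 - p0))"
      using i by (simp add: opsimps)
    then show "p0 * f i * (1 - p0) * y1 * y = p0 * f i * (1 - p0)" by (simp only: op_eq_iff)
  qed
  have hZ2: "\<forall>j\<in>I. y * y1 * (1 - p0) * M j * p0 = (1 - p0) * M j * p0"
  proof (intro ballI)
    fix j assume j: "j \<in> I"
    have Mop: "op (M j) = (\<Sum>i\<in>{1..n}. adj (F i) \<circ> W i j)"
      unfolding M_def op_sum using j unfolding I_def by (intro sum.cong) (auto simp: opsimps[unfolded I_def])
    have "op (y * y1 * (1 - p0) * M j * p0) = op ((1 - p0) * M j * p0)"
      using A3Z2 j by (simp add: opsimps Mop I_def del: op_sum)
    then show "y * y1 * (1 - p0) * M j * p0 = (1 - p0) * M j * p0" by (simp only: op_eq_iff)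
  qed
  have G2: "\<forall>i\<in>{1..n}. \<forall>j\<in>{1..n}. (\<Sum>l\<in>{1..n}. S i l \<circ> adj (S j l)) = kdelta i j P0"
  proof (intro ballI)
    fix i j assume i: "i \<in> {1..n}" and j: "j \<in> {1..n}"
    have r: "(\<Sum>l\<in>I. St i l * p0 * dag (St j l * p0)) = (if i = j then p0 else 0)"
      by (rule ring_goal2[OF fin hW1 _ _ hYr hc hp hpp hd h4 hX]) (use i j in \<open>simp_all add: M_def St_def I_def\<close>)
    have "(\<Sum>l\<in>{1..n}. S i l \<circ> adj (S j l)) = (\<Sum>l\<in>I. op (St i l * p0) \<circ> adj (op (St j l * p0)))"
      using Sop i j by (intro sum.cong) (simp_all add: I_def)
    also have "\<dots> = op (\<Sum>l\<in>I. St i l * p0 * dag (St j l * p0))" by (simp only: op_sum op_times op_dag)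
    also have "\<dots> = kdelta i j P0" by (simp only: r) (simp add: kdelta_def opsimps)
    finally show "(\<Sum>l\<in>{1..n}. S i l \<circ> adj (S j l)) = kdelta i j P0" .
  qed
  have G3: "\<forall>i\<in>{1..n}. \<forall>j\<in>{1..n}. (\<Sum>l\<in>{1..n}. adj (S l i) \<circ> S l j) = kdelta i j P0"
  proof (intro ballI)
    fix i j assume i: "i \<in> {1..n}" and j: "j \<in> {1..n}"
    have r: "(\<Sum>l\<in>I. dag (St l i * p0) * (St l j * p0)) = (if i = j then p0 else 0)"
      by (rule ring_goal3[OF fin hW2 _ _ hYr hc hp hpp hZ2]) (use i j in \<open>simp_all add: M_def St_def I_def\<close>)
    have "(\<Sum>l\<in>{1..n}. adj (S l i) \<circ> S l j) = (\<Sum>l\<in>I. adj (op (St l i * p0)) \<circ> op (St l j * p0))"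
      using Sop i j by (intro sum.cong) (simp_all add: I_def)
    also have "\<dots> = op (\<Sum>l\<in>I. dag (St l i * p0) * (St l j * p0))" by (simp only: op_sum op_times op_dag)
    also have "\<dots> = kdelta i j P0" by (simp only: r) (simp add: kdelta_def opsimps)
    finally show "(\<Sum>l\<in>{1..n}. adj (S l i) \<circ> S l j) = kdelta i j P0" .
  qed
  show ?thesis using G1 G2 G3 by blast

qed


end
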